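(* Let $G$ be a DCG containing a cycle $C=(v_1,\dots,v_k)$ of distinct vertices, $k\ge 2$ (edges $v_i\to v_{i+1}$, indices mod $k$). Let $H=\textsc{Reverse}(G,C)$. Then $H$ is Markov equivalent to $G$.
   Context: A DCG is a directed graph without self-loops (cycles and 2-cycles allowed). $\mathrm{Pa}_G(v)$ is the set of $u$ with $u\to v$ in $G$. $\textsc{Reverse}(G,C)$ is the DCG on the same vertex set with edge set $$\{v_{i+1}\to v_i : 1\le i\le k\}\ \cup\ \{a\to b\in E(G): b\notin C\}\ \cup\ \{w\to v_{i-1} : 1\le i\le k,\ w\in \mathrm{Pa}_G(v_i)\setminus\{v_{i-1}\}\},$$ i.e. the cycle is reversed, and each other incoming edge $w\to v_i$ of a cycle vertex is replaced by $w\to v_{i-1}$ (indices mod $k$); edges into vertices outside $C$ are kept. d-separation: a path between $a\neq b$ is a sequence of vertices (repeats allowed) with a specified directed edge (either direction) between consecutive vertices; an internal vertex is a collider if both adjacent path-edges point into it; $x$ is a descendant of $v$ if $x=v$ or there is a directed path from $v$ to $x$; the path is active given $Z\subseteq V\setminus\{a,b\}$ if every internal non-collider is outside $Z$ and every collider is in $Z$ or has a descendant in $Z$; $a,b$ are d-separated given $Z$ if no active path exists. Two graphs on the same vertex set are Markov equivalent if they have the same d-separation statements. *)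

theory Defs
  imports Main
begin

definition dcg :: "'a set \<Rightarrow> ('a \<times> 'a) set \<Rightarrow> bool" where
  "dcg V E \<longleftrightarrow> finite V \<and> E \<subseteq> V \<times> V \<and> (\<forall>v. (v, v) \<notin> E)"

definition parents :: "('a \<times> 'a) set \<Rightarrow> 'a \<Rightarrow> 'a set" where
  "parents E v = {u. (u, v) \<in> E}"

definition is_cycle :: "'a set \<Rightarrow> ('a \<times> 'a) set \<Rightarrow> 'a list \<Rightarrow> bool" where
  "is_cycle V E C \<longleftrightarrow> length C \<ge> 2 \<and> distinct C \<and> set C \<subseteq> V \<and>
     (\<forall>i < length C. (C ! i, C ! ((i + 1) mod length C)) \<in> E)"

definition reverse_cycle :: "('a \<times> 'a) set \<Rightarrow> 'a list \<Rightarrow> ('a \<times> 'a) set" where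
  "reverse_cycle E C =
     (let k = length C in
       {(C ! ((i + 1) mod k), C ! i) | i. i < k}
     \<union> {(a, b). (a, b) \<in> E \<and> b \<notin> set C}
     \<union> {(w, C ! ((i + k - 1) mod k)) | i w. i < k \<and> w \<in> parents E (C ! i) - {C ! ((i + k - 1) mod k)}})"

text \<open>A path is a vertex list xs (repeats allowed) together with a list ds of edge
  specifications: ds ! i = True means the edge xs!i -> xs!(i+1), False means xs!(i+1) -> xs!i.\<close>
definition is_path :: "('a \<times> 'a) set \<Rightarrow> 'a \<Rightarrow> 'a \<Rightarrow> 'a list \<Rightarrow> bool list \<Rightarrow> bool" where
  "is_path E a b xs ds \<longleftrightarrow> length xs \<ge> 2 \<and> length ds = length xs - 1 \<and>
     hd xs = a \<and> last xs = b \<and>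
     (\<forall>i < length ds. (if ds ! i then (xs ! i, xs ! (i + 1)) \<in> E
                                 else (xs ! (i + 1), xs ! i) \<in> E))"

definition is_collider :: "bool list \<Rightarrow> nat \<Rightarrow> bool" where
  "is_collider ds i \<longleftrightarrow> ds ! (i - 1) \<and> \<not> ds ! i"

definition descendant :: "('a \<times> 'a) set \<Rightarrow> 'a \<Rightarrow> 'a \<Rightarrow> bool" where
  "descendant E v x \<longleftrightarrow> (v, x) \<in> E\<^sup>*"

definition active_path :: "('a \<times> 'a) set \<Rightarrow> 'a set \<Rightarrow> 'a list \<Rightarrow> bool list \<Rightarrow> bool" where
  "active_path E Z xs ds \<longleftrightarrow>
     (\<forall>i. 0 < i \<and> i < length xs - 1 \<longrightarrow>
        (if is_collider ds i then (\<exists>z \<in> Z. descendant E (xs ! i) z)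
         else xs ! i \<notin> Z))"

definition d_separated :: "('a \<times> 'a) set \<Rightarrow> 'a \<Rightarrow> 'a \<Rightarrow> 'a set \<Rightarrow> bool" where
  "d_separated E a b Z \<longleftrightarrow> \<not> (\<exists>xs ds. is_path E a b xs ds \<and> active_path E Z xs ds)"

definition markov_equivalent :: "'a set \<Rightarrow> ('a \<times> 'a) set \<Rightarrow> ('a \<times> 'a) set \<Rightarrow> bool" where
  "markov_equivalent V E1 E2 \<longleftrightarrow>
     (\<forall>a \<in> V. \<forall>b \<in> V. \<forall>Z. a \<noteq> b \<and> Z \<subseteq> V - {a, b} \<longrightarrow>
        (d_separated E1 a b Z \<longleftrightarrow> d_separated E2 a b Z))"

end

theory Submission
  imports Defs
begin


inductive dp :: "('a \<times> 'a) set \<Rightarrow> 'a set \<Rightarrow> 'a \<Rightarrow> 'a \<Rightarrow> bool" for E W where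
  dp1: "(s,t) \<in> E \<Longrightarrow> dp E W s t"
| dp2: "(s,m) \<in> E \<Longrightarrow> m \<in> W \<Longrightarrow> dp E W m t \<Longrightarrow> dp E W s t"

lemma dp_snoc: "dp E W s m \<Longrightarrow> m \<in> W \<Longrightarrow> (m,t) \<in> E \<Longrightarrow> dp E W s t"
  by (induction rule: dp.induct) (auto intro: dp.intros)

lemma dp_trancl: "dp E W s t \<Longrightarrow> (s,t) \<in> E\<^sup>+"
  by (induction rule: dp.induct) (auto intro: trancl_into_trancl2)

definition cyc :: "('a \<times> 'a) set \<Rightarrow> 'a set \<Rightarrow> ('a \<Rightarrow> 'a) \<Rightarrow> ('a \<Rightarrow> 'a) \<Rightarrow> bool" where
  "cyc E S nx pv \<longleftrightarrow> (\<forall>y\<in>S. nx y \<in> S \<and> pv y \<in> S \<and> nx (pv y) = y \<and> pv (nx y) = y \<and> nx y \<noteq> y \<and> (pv y, y) \<in> E)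
     \<and> (\<forall>y\<in>S. \<forall>y'\<in>S. \<exists>n. (nx^^n) y = y')"

definition revc :: "('a \<times> 'a) set \<Rightarrow> 'a set \<Rightarrow> ('a \<Rightarrow> 'a) \<Rightarrow> ('a \<times> 'a) set" where
  "revc E S nx = {(x,y). (y \<notin> S \<and> (x,y) \<in> E) \<or> (y \<in> S \<and> (x = nx y \<or> ((x, nx y) \<in> E \<and> x \<noteq> y)))}"

lemma cyc_edge: "cyc E S nx pv \<Longrightarrow> y \<in> S \<Longrightarrow> (y, nx y) \<in> E"
  unfolding cyc_def by metis

lemma cyc_iter: "cyc E S nx pv \<Longrightarrow> y \<in> S \<Longrightarrow> (nx^^n) y \<in> S \<and> (0 < n \<longrightarrow> dp E S y ((nx^^n) y))"
proof (induction n)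
  case 0 then show ?case by simp
next
  case (Suc n)
  note IH = Suc.IH and pr = Suc.prems
  then have S: "(nx^^n) y \<in> S" by simp
  have e: "((nx^^n) y, (nx^^Suc n) y) \<in> E" using cyc_edge[OF Suc.prems(1) S] by simp
  have "(nx^^Suc n) y \<in> S" using S Suc.prems(1) unfolding cyc_def by simp
  moreover have "dp E S y ((nx^^Suc n) y)"
  proof (cases n)
    case 0 then show ?thesis using e by (auto intro: dp1)
  next
    case (Suc m)
    then have "dp E S y ((nx^^n) y)" using IH pr by simp
    then show ?thesis by (rule dp_snoc[OF _ S e])
  qed
  ultimately show ?case by simp
qed

lemma cyc_dp: "cyc E S nx pv \<Longrightarrow> y \<in> S \<Longrightarrow> y' \<in> S \<Longrightarrow> y \<noteq> y' \<Longrightarrow> dp E S y y'"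
proof -
  assume c: "cyc E S nx pv" and y: "y \<in> S" "y' \<in> S" "y \<noteq> y'"
  then obtain n where n: "(nx^^n) y = y'" unfolding cyc_def by blast
  with y have "0 < n" by (cases n) auto
  with cyc_iter[OF c y(1), of n] n show ?thesis by simp
qed

lemma pv_iter: "cyc E S nx pv \<Longrightarrow> z \<in> S \<Longrightarrow> (pv^^n) ((nx^^n) z) = z"
proof (induction n)
  case 0 then show ?case by simp
next
  case (Suc n)
  have S: "(nx^^n) z \<in> S" using cyc_iter[OF Suc.prems] by simp
  have e1: "(nx^^Suc n) z = nx ((nx^^n) z)" by simp
  have e2: "\<And>w. (pv^^Suc n) w = (pv^^n) (pv w)" by (simp add: funpow_Suc_right del: funpow.simps)
  have "(pv^^Suc n) ((nx^^Suc n) z) = (pv^^n) (pv (nx ((nx^^n) z)))"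
    using e1 e2 by simp
  also have "\<dots> = (pv^^n) ((nx^^n) z)" using S Suc.prems(1) unfolding cyc_def by simp
  finally show ?case using Suc by simp
qed

lemma cyc_rev: "cyc E S nx pv \<Longrightarrow> cyc (revc E S nx) S pv nx"
proof -
  assume c: "cyc E S nx pv"
  have "\<forall>y\<in>S. \<forall>y'\<in>S. \<exists>n. (pv^^n) y = y'"
  proof (intro ballI)
    fix y y' assume y: "y \<in> S" "y' \<in> S"
    then obtain n where n: "(nx^^n) y' = y" using c unfolding cyc_def by blast
    then show "\<exists>n. (pv^^n) y = y'" using pv_iter[OF c y(2), of n] by blast
  qed
  moreover have "\<forall>y\<in>S. pv y \<in> S \<and> nx y \<in> S \<and> pv (nx y) = y \<and> nx (pv y) = y \<and> pv y \<noteq> y \<and> (nx y, y) \<in> revc E S nx"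
  proof
    fix y assume y: "y \<in> S"
    have f: "pv y \<in> S \<and> nx y \<in> S \<and> pv (nx y) = y \<and> nx (pv y) = y \<and> nx y \<noteq> y"
      using c y unfolding cyc_def by blast
    then have "pv y \<noteq> y" by metis
    moreover have "(nx y, y) \<in> revc E S nx" using y unfolding revc_def by simp
    ultimately show "pv y \<in> S \<and> nx y \<in> S \<and> pv (nx y) = y \<and> nx (pv y) = y \<and> pv y \<noteq> y \<and> (nx y, y) \<in> revc E S nx"
      using f by blast
  qed
  ultimately show ?thesis unfolding cyc_def by blast
qed

lemma revc_revc: "cyc E S nx pv \<Longrightarrow> \<forall>v. (v,v) \<notin> E \<Longrightarrow> revc (revc E S nx) S pv = E"
  unfolding revc_def cyc_def by auto

lemma rtrancl_revc: "cyc E S nx pv \<Longrightarrow> (revc E S nx)\<^sup>* = E\<^sup>*"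
proof -
  assume c: "cyc E S nx pv"
  have c2: "cyc (revc E S nx) S pv nx" using cyc_rev[OF c] .
  have S: "\<And>y. y \<in> S \<Longrightarrow> nx y \<in> S \<and> pv y \<in> S \<and> nx (pv y) = y \<and> pv (nx y) = y \<and> nx y \<noteq> y"
    using c unfolding cyc_def by blast
  have 1: "E \<subseteq> (revc E S nx)\<^sup>*"
  proof
    fix p assume p: "p \<in> E"
    obtain x y where xy: "p = (x,y)" by (cases p)
    show "p \<in> (revc E S nx)\<^sup>*"
    proof (cases "y \<in> S")
      case False then show ?thesis using p xy unfolding revc_def by auto
    next
      case True
      have ne: "pv y \<noteq> y" using S[OF True] by metis
      have d: "(pv y, y) \<in> (revc E S nx)\<^sup>*"
        using dp_trancl[OF cyc_dp[OF c2 _ True ne]] S[OF True] by auto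
      show ?thesis
      proof (cases "x = pv y")
        case True then show ?thesis using d xy by simp
      next
        case False
        then have "(x, pv y) \<in> revc E S nx" using p xy S[OF True] True unfolding revc_def by auto
        then show ?thesis using d xy by auto
      qed
    qed
  qed
  have 2: "revc E S nx \<subseteq> E\<^sup>*"
  proof
    fix p assume p: "p \<in> revc E S nx"
    obtain x y where xy: "p = (x,y)" by (cases p)
    show "p \<in> E\<^sup>*"
    proof (cases "y \<in> S")
      case False then show ?thesis using p xy unfolding revc_def by auto
    next
      case True
      have d: "(nx y, y) \<in> E\<^sup>*"
        using dp_trancl[OF cyc_dp[OF c _ True, of "nx y"]] S[OF True] by auto
      from p xy True have "x = nx y \<or> (x, nx y) \<in> E" unfolding revc_def by auto
      then show ?thesis using d xy by auto
    qed
  qed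
  show ?thesis using rtrancl_subset_rtrancl[OF 1] rtrancl_subset_rtrancl[OF 2] by auto
qed



definition cidx :: "'a list \<Rightarrow> 'a \<Rightarrow> nat" where
  "cidx C y = (THE i. i < length C \<and> C!i = y)"

lemma cidx_nth: "distinct C \<Longrightarrow> i < length C \<Longrightarrow> cidx C (C!i) = i"
  unfolding cidx_def by (rule the_equality) (auto simp: nth_eq_iff_index_eq)

definition nxt :: "'a list \<Rightarrow> 'a \<Rightarrow> 'a" where
  "nxt C y = C!((cidx C y + 1) mod length C)"
definition prv :: "'a list \<Rightarrow> 'a \<Rightarrow> 'a" where
  "prv C y = C!((cidx C y + length C - 1) mod length C)"

lemma mod_m1: "2 \<le> (k::nat) \<Longrightarrow> i < k \<Longrightarrow> ((i+k-1) mod k + 1) mod k = i"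
proof -
  assume k: "2 \<le> k" "i < k"
  have "((i+k-1) mod k + 1) mod k = (i+k-1+1) mod k" by (simp add: mod_add_left_eq mod_Suc_eq)
  also have "i+k-1+1 = i+k" using k by simp
  finally show ?thesis using k by simp
qed

lemma mod_m2: "2 \<le> (k::nat) \<Longrightarrow> i < k \<Longrightarrow> ((i+1) mod k + k - 1) mod k = i"
proof -
  assume k: "2 \<le> k" "i < k"
  have "(i+1) mod k + k - 1 = (i+1) mod k + (k-1)" using k by simp
  then have "((i+1) mod k + k - 1) mod k = (i+1+(k-1)) mod k" by (simp add: mod_add_left_eq mod_Suc_eq)
  also have "i+1+(k-1) = i+k" using k by simp
  finally show ?thesis using k by simp
qed

lemma cycle_facts:
  assumes c: "is_cycle V E C"
  shows "cyc E (set C) (nxt C) (prv C)"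
    and "reverse_cycle E C = revc E (set C) (nxt C)"
proof -
  define k where "k = length C"
  have k2: "2 \<le> k" and dist: "distinct C" and ed: "\<And>i. i < k \<Longrightarrow> (C!i, C!((i+1) mod k)) \<in> E"
    using c unfolding is_cycle_def k_def by auto
  have nx: "\<And>i. i<k \<Longrightarrow> nxt C (C!i) = C!((i+1) mod k)"
    by (simp add: nxt_def cidx_nth dist k_def)
  have pv: "\<And>i. i<k \<Longrightarrow> prv C (C!i) = C!((i+k-1) mod k)"
    by (simp add: prv_def cidx_nth dist k_def)
  have lt1: "\<And>i. (i+1) mod k < k" and lt2: "\<And>i. (i+k-1) mod k < k" using k2 by auto
  have iter: "\<And>n i. i<k \<Longrightarrow> (nxt C ^^ n) (C!i) = C!((i+n) mod k)"
  proof -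
    fix n i assume i: "i < k"
    show "(nxt C ^^ n) (C!i) = C!((i+n) mod k)"
    proof (induction n)
      case 0 then show ?case using i by simp
    next
      case (Suc n)
      have "(nxt C ^^ Suc n) (C!i) = nxt C (C!((i+n) mod k))" using Suc by simp
      also have "\<dots> = C!(((i+n) mod k + 1) mod k)" using nx[of "(i+n) mod k"] k2 by simp
      also have "((i+n) mod k + 1) mod k = (i + Suc n) mod k" by (simp add: mod_add_left_eq mod_Suc_eq)
      finally show ?case .
    qed
  qed
  have inS: "\<And>y. y \<in> set C \<Longrightarrow> \<exists>i<k. y = C!i" by (auto simp: in_set_conv_nth k_def)
  show "cyc E (set C) (nxt C) (prv C)"
    unfolding cyc_def
  proof (intro conjI ballI)
    fix y assume "y \<in> set C"
    then obtain i where i: "i < k" "y = C!i" using inS by blast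
    show "nxt C y \<in> set C" using i nx lt1 by (simp add: k_def)
    show "prv C y \<in> set C" using i pv lt2 by (simp add: k_def)
    show "nxt C (prv C y) = y" using i pv nx[OF lt2] mod_m1[OF k2] by simp
    show "prv C (nxt C y) = y" using i nx pv[OF lt1] mod_m2[OF k2] by simp
    show "nxt C y \<noteq> y"
    proof
      assume "nxt C y = y"
      then have "C!((i+1) mod k) = C!i" using i nx by simp
      then have "(i+1) mod k = i" using dist i lt1 by (simp add: nth_eq_iff_index_eq k_def)
      then show False
      proof (cases "i+1 < k")
        case True then show False using \<open>(i+1) mod k = i\<close> by simp
      next
        case False
        then have "i+1 = k" using i by simp
        then show False using \<open>(i+1) mod k = i\<close> k2 by simp
      qed
    qed
    show "(prv C y, y) \<in> E" using ed[OF lt2[of i]] i pv mod_m1[OF k2] by simp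
  next
    fix y y' assume "y \<in> set C" "y' \<in> set C"
    then obtain i j where i: "i < k" "y = C!i" and j: "j < k" "y' = C!j" using inS by blast
    have "(i + (j + k - i)) mod k = j" using i j by simp
    then show "\<exists>n. (nxt C ^^ n) y = y'" using iter[OF i(1), of "j+k-i"] i j by metis
  qed
  show "reverse_cycle E C = revc E (set C) (nxt C)"
  proof (rule set_eqI)
    fix p
    obtain x y :: 'a where p: "p = (x,y)" by (cases p)
    have "(x,y) \<in> reverse_cycle E C \<longleftrightarrow>
      (\<exists>i<k. x = C!((i+1) mod k) \<and> y = C!i) \<or> ((x,y)\<in>E \<and> y\<notin>set C) \<or>
      (\<exists>i<k. (x, C!i)\<in>E \<and> x \<noteq> C!((i+k-1) mod k) \<and> y = C!((i+k-1) mod k))"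
      unfolding reverse_cycle_def Let_def parents_def k_def by blast
    also have "\<dots> \<longleftrightarrow> (x,y) \<in> revc E (set C) (nxt C)"
    proof
      assume "(\<exists>i<k. x = C!((i+1) mod k) \<and> y = C!i) \<or> ((x,y)\<in>E \<and> y\<notin>set C) \<or>
        (\<exists>i<k. (x, C!i)\<in>E \<and> x \<noteq> C!((i+k-1) mod k) \<and> y = C!((i+k-1) mod k))"
      then show "(x,y) \<in> revc E (set C) (nxt C)"
      proof (elim disjE exE conjE)
        fix i assume "i < k" "x = C!((i+1) mod k)" "y = C!i"
        then show ?thesis using nx by (auto simp: revc_def k_def)
      next
        assume "(x,y)\<in>E" "y\<notin>set C" then show ?thesis by (auto simp: revc_def)
      next
        fix i assume i: "i<k" "(x, C!i)\<in>E" "x \<noteq> C!((i+k-1) mod k)" "y = C!((i+k-1) mod k)"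
        have "nxt C y = C!i" using i nx[OF lt2] mod_m1[OF k2] by simp
        moreover have "y \<in> set C" using i lt2 by (simp add: k_def)
        ultimately show ?thesis using i by (auto simp: revc_def)
      qed
    next
      assume r: "(x,y) \<in> revc E (set C) (nxt C)"
      show "(\<exists>i<k. x = C!((i+1) mod k) \<and> y = C!i) \<or> ((x,y)\<in>E \<and> y\<notin>set C) \<or>
        (\<exists>i<k. (x, C!i)\<in>E \<and> x \<noteq> C!((i+k-1) mod k) \<and> y = C!((i+k-1) mod k))"
      proof (cases "y \<in> set C")
        case False then show ?thesis using r by (auto simp: revc_def)
      next
        case True
        then obtain j where j: "j < k" "y = C!j" using inS by blast
        from r True have "x = nxt C y \<or> ((x, nxt C y) \<in> E \<and> x \<noteq> y)" by (auto simp: revc_def)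
        then show ?thesis
        proof
          assume "x = nxt C y" then show ?thesis using j nx by blast
        next
          assume a: "(x, nxt C y) \<in> E \<and> x \<noteq> y"
          have "C!(((j+1) mod k + k - 1) mod k) = y" using j mod_m2[OF k2] by simp
          then show ?thesis using a j nx lt1[of j] by metis
        qed
      qed
    qed
    finally show "p \<in> reverse_cycle E C \<longleftrightarrow> p \<in> revc E (set C) (nxt C)" using p by simp
  qed
qed



inductive rch :: "('a \<times> 'a) set \<Rightarrow> ('a \<Rightarrow> bool \<Rightarrow> bool \<Rightarrow> bool) \<Rightarrow> 'a \<Rightarrow> 'a \<Rightarrow> bool \<Rightarrow> bool"
  for E ok a where
  st: "rch E ok a a False"
| fw: "rch E ok a u h \<Longrightarrow> (u,x) \<in> E \<Longrightarrow> ok u h False \<Longrightarrow> rch E ok a x True"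
| bw: "rch E ok a u h \<Longrightarrow> (x,u) \<in> E \<Longrightarrow> ok u h True \<Longrightarrow> rch E ok a x False"

lemma dp_fwd:
  assumes "dp H W s t" "\<And>m. m \<in> W \<Longrightarrow> ok m True False" "rch H ok a s h" "ok s h False"
  shows "rch H ok a t True"
  using assms
proof (induction arbitrary: h rule: dp.induct)
  case (dp1 s t) then show ?case by (blast intro: rch.fw)
next
  case (dp2 s m t)
  have "rch H ok a m True" using dp2 by (blast intro: rch.fw)
  then show ?case using dp2 by blast
qed

lemma dp_bwd:
  assumes "dp H W s t" "\<And>m. m \<in> W \<Longrightarrow> ok m False True" "rch H ok a t h" "ok t h True"
  shows "rch H ok a s False"
  using assms
proof (induction rule: dp.induct)
  case (dp1 s t) then show ?case by (blast intro: rch.bw)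
next
  case (dp2 s m t)
  have "rch H ok a m False" using dp2 by blast
  then show ?case using dp2 by (blast intro: rch.bw)
qed

lemma dp_anc:
  assumes "dp E W s t" "t \<in> An" "\<And>x y. (x,y) \<in> E \<Longrightarrow> y \<in> An \<Longrightarrow> x \<in> An"
  shows "s \<in> An"
  using assms by (induction rule: dp.induct) blast+

lemma sim:
  assumes cy: "cyc E S nx pv" and H: "H = revc E S nx"
   and okd: "\<And>v h m. ok v h m = (if h \<and> m then v \<in> An else v \<notin> Z)"
   and ZAn: "Z \<subseteq> An" and Anc: "\<And>x y. (x,y) \<in> E \<Longrightarrow> y \<in> An \<Longrightarrow> x \<in> An"
   and r: "rch E ok a b h" and bZ: "b \<notin> Z"
  shows "\<exists>h'. rch H ok a b h'"
proof -
  have Hch: "\<And>x y. (x,y)\<in>H \<longleftrightarrow> (y\<notin>S \<and> (x,y)\<in>E) \<or> (y\<in>S \<and> (x = nx y \<or> ((x, nx y)\<in>E \<and> x\<noteq>y)))"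
    by (simp add: H revc_def)
  have cf: "\<And>y. y \<in> S \<Longrightarrow> nx y \<in> S \<and> pv y \<in> S \<and> nx (pv y) = y \<and> pv (nx y) = y \<and> nx y \<noteq> y \<and> (pv y, y) \<in> E"
    using cy unfolding cyc_def by blast
  have cy2: "cyc H S pv nx" using cyc_rev[OF cy] H by simp
  have split: "(\<forall>y\<in>S. y \<in> An) \<or> (\<forall>y\<in>S. y \<notin> An)"
  proof (rule ccontr)
    assume "\<not> ?thesis"
    then obtain y y' where y: "y \<in> S" "y \<in> An" "y' \<in> S" "y' \<notin> An" by blast
    then have "y' \<noteq> y" by blast
    then have "dp E S y' y" using cyc_dp[OF cy y(3) y(1)] by blast
    then have "y' \<in> An" using y(2) by (rule dp_anc) (blast intro: Anc)
    then show False using y by blast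
  qed
  note R_fw = rch.fw[of H ok a] and R_bw = rch.bw[of H ok a]
  show ?thesis
  proof (cases "\<forall>y\<in>S. y \<in> An")
    case A: True
    have okS: "\<And>u h m. u\<in>S \<Longrightarrow> u\<notin>Z \<Longrightarrow> ok u h m" using okd A by simp
    have okHH: "\<And>u. u\<in>S \<Longrightarrow> ok u True True" using okd A by simp
    define cov where "cov u h = (if u\<notin>S then rch H ok a u h else if h then (\<exists>h0. rch H ok a (pv u) h0 \<and> ok (pv u) h0 True) else (u\<notin>Z \<longrightarrow> (\<exists>h0. rch H ok a u h0)))" for u h
    have keyT: "\<And>u h0. u\<in>S \<Longrightarrow> rch H ok a (pv u) h0 \<Longrightarrow> ok (pv u) h0 True \<Longrightarrow> rch H ok a u False"
    proof -
      fix u h0 assume u: "u\<in>S" and r0: "rch H ok a (pv u) h0" and o: "ok (pv u) h0 True"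
      have "(u, pv u) \<in> H" using Hch cf[OF u] by simp
      then show "rch H ok a u False" using R_bw[OF r0 _ o] by blast
    qed
    have key1: "\<And>u h0 x. u\<in>S \<Longrightarrow> rch H ok a u h0 \<Longrightarrow> u\<notin>Z \<Longrightarrow> (u,x)\<in>E \<Longrightarrow> cov x True"
    proof -
      fix u h0 x assume u: "u\<in>S" and r0: "rch H ok a u h0" and uZ: "u\<notin>Z" and e: "(u,x)\<in>E"
      show "cov x True"
      proof (cases "x \<in> S")
        case False
        then have "(u,x) \<in> H" using Hch e by simp
        then show ?thesis using R_fw[OF r0 _ okS[OF u uZ]] False by (simp add: cov_def)
      next
        case xS: True
        show ?thesis
        proof (cases "u = pv x")
          case True then show ?thesis using xS r0 okS[OF u uZ] by (auto simp: cov_def)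
        next
          case False
          have "(u, pv x) \<in> H" using Hch cf[OF xS] e False by simp
          then have "rch H ok a (pv x) True" using R_fw[OF r0 _ okS[OF u uZ]] by blast
          then show ?thesis using xS okHH cf[OF xS] by (auto simp: cov_def)
        qed
      qed
    qed
    have key2: "\<And>u h0 x. u\<in>S \<Longrightarrow> rch H ok a u h0 \<Longrightarrow> u\<notin>Z \<Longrightarrow> (x,u)\<in>E \<Longrightarrow> cov x False"
    proof -
      fix u h0 x assume u: "u\<in>S" and r0: "rch H ok a u h0" and uZ: "u\<notin>Z" and e: "(x,u)\<in>E"
      have e2: "(u, pv u) \<in> H" using Hch cf[OF u] by simp
      show "cov x False"
      proof (cases "x = pv u")
        case True
        then have "rch H ok a x True" using R_fw[OF r0 e2 okS[OF u uZ]] by simp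
        then show ?thesis using True cf[OF u] by (auto simp: cov_def)
      next
        case False
        have e3: "(x, pv u) \<in> H" using Hch cf[OF u] e False by simp
        have "rch H ok a (pv u) True" using R_fw[OF r0 e2 okS[OF u uZ]] .
        then have "rch H ok a x False" using R_bw[OF _ e3 okHH] cf[OF u] by blast
        then show ?thesis by (auto simp: cov_def)
      qed
    qed
    have "cov b h" using r
    proof (induction rule: rch.induct)
      case st then show ?case by (auto simp: cov_def intro: rch.st)
    next
      case (fw u h x)
      show ?case
      proof (cases "u \<in> S")
        case uS: False
        then have r0: "rch H ok a u h" using fw.IH by (simp add: cov_def)
        show ?thesis
        proof (cases "x \<in> S")
          case False
          then have "(u,x) \<in> H" using Hch fw.hyps by simp
          then show ?thesis using R_fw[OF r0 _ fw.hyps(3)] False by (simp add: cov_def)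
        next
          case xS: True
          have "u \<noteq> pv x" using uS cf[OF xS] by blast
          then have "(u, pv x) \<in> H" using Hch cf[OF xS] fw.hyps by simp
          then have "rch H ok a (pv x) True" using R_fw[OF r0 _ fw.hyps(3)] by blast
          then show ?thesis using xS okHH cf[OF xS] by (auto simp: cov_def)
        qed
      next
        case uS: True
        have uZ: "u \<notin> Z" using fw.hyps(3) okd by simp
        have "\<exists>h0. rch H ok a u h0"
        proof (cases h)
          case True
          then obtain h0 where "rch H ok a (pv u) h0" "ok (pv u) h0 True" using fw.IH uS by (auto simp: cov_def)
          then show ?thesis using keyT[OF uS] by blast
        next
          case False then show ?thesis using fw.IH uS uZ by (auto simp: cov_def)
        qed
        then show ?thesis using key1[OF uS _ uZ fw.hyps(2)] by blast
      qed
    next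
      case (bw u h x)
      show ?case
      proof (cases "u \<in> S")
        case uS: False
        then have r0: "rch H ok a u h" using bw.IH by (simp add: cov_def)
        have "(x,u) \<in> H" using Hch bw.hyps uS by simp
        then have "rch H ok a x False" using R_bw[OF r0 _ bw.hyps(3)] by blast
        then show ?thesis by (auto simp: cov_def)
      next
        case uS: True
        show ?thesis
        proof (cases h)
          case False
          have uZ: "u \<notin> Z" using bw.hyps(3) okd False by simp
          then show ?thesis using key2[OF uS _ uZ bw.hyps(2)] bw.IH uS False by (auto simp: cov_def)
        next
          case True
          then obtain h0 where r0: "rch H ok a (pv u) h0" and o0: "ok (pv u) h0 True"
            using bw.IH uS by (auto simp: cov_def)
          show ?thesis
          proof (cases "x = pv u")
            case True then show ?thesis using r0 cf[OF uS] by (auto simp: cov_def)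
          next
            case False
            have e3: "(x, pv u) \<in> H" using Hch cf[OF uS] bw.hyps False by simp
            then have "rch H ok a x False" using R_bw[OF r0 e3 o0] by blast
            then show ?thesis by (auto simp: cov_def)
          qed
        qed
      qed
    qed
    then show ?thesis
    proof (cases "b \<in> S")
      case False then show ?thesis using \<open>cov b h\<close> by (auto simp: cov_def)
    next
      case True
      show ?thesis
      proof (cases h)
        case True
        then obtain h0 where "rch H ok a (pv b) h0" "ok (pv b) h0 True" using \<open>cov b h\<close> \<open>b \<in> S\<close> by (auto simp: cov_def)
        then show ?thesis using keyT[OF \<open>b \<in> S\<close>] by blast
      next
        case False then show ?thesis using \<open>cov b h\<close> \<open>b \<in> S\<close> bZ by (auto simp: cov_def)
      qed
    qed
  next
    case False
    then have B: "\<forall>y\<in>S. y \<notin> An" using split by blast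
    have SZ: "\<And>m. m \<in> S \<Longrightarrow> m \<notin> Z" using B ZAn by blast
    have okT: "\<And>m. m \<in> S \<Longrightarrow> ok m True False" and okF: "\<And>m. m \<in> S \<Longrightarrow> ok m False True"
      using okd SZ by auto
    have dpH: "\<And>y. y \<in> S \<Longrightarrow> dp H S (pv y) y"
      using cyc_dp[OF cy2] cf by metis
    have eH: "\<And>x y. (x,y) \<in> E \<Longrightarrow> y \<in> S \<Longrightarrow> dp H S x y"
    proof -
      fix x y assume e: "(x,y) \<in> E" and y: "y \<in> S"
      show "dp H S x y"
      proof (cases "x = pv y")
        case True then show ?thesis using dpH[OF y] by simp
      next
        case False
        then have "(x, pv y) \<in> H" using Hch cf[OF y] e by simp
        then show ?thesis using dp2 dpH[OF y] cf[OF y] by metis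
      qed
    qed
    have "rch H ok a b h" using r
    proof (induction rule: rch.induct)
      case st then show ?case by (rule rch.st)
    next
      case (fw u h x)
      show ?case
      proof (cases "x \<in> S")
        case False
        then have "(u,x) \<in> H" using Hch fw.hyps by simp
        then show ?thesis using R_fw[OF fw.IH _ fw.hyps(3)] by blast
      next
        case True
        show ?thesis using dp_fwd[OF eH[OF fw.hyps(2) True] okT fw.IH fw.hyps(3)] by blast
      qed
    next
      case (bw u h x)
      show ?case
      proof (cases "u \<in> S")
        case False
        then have "(x,u) \<in> H" using Hch bw.hyps by simp
        then show ?thesis using R_bw[OF bw.IH _ bw.hyps(3)] by blast
      next
        case True
        show ?thesis using dp_bwd[OF eH[OF bw.hyps(2) True] okF bw.IH bw.hyps(3)] by blast
      qed
    qed
    then show ?thesis by blast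
  qed
qed



definition okf :: "('a \<times> 'a) set \<Rightarrow> 'a set \<Rightarrow> 'a \<Rightarrow> bool \<Rightarrow> bool \<Rightarrow> bool" where
  "okf E Z v h m = (if h \<and> m then (\<exists>z\<in>Z. descendant E v z) else v \<notin> Z)"

lemma path_rch:
  assumes p: "is_path E a b xs ds" and ac: "active_path E Z xs ds" and aZ: "a \<notin> Z"
  shows "rch E (okf E Z) a b (ds!(length ds - 1))"
proof -
  have L: "length xs \<ge> 2" "length ds = length xs - 1" "hd xs = a" "last xs = b"
    and ed: "\<forall>i<length ds. (if ds!i then (xs!i, xs!(i+1)) \<in> E else (xs!(i+1), xs!i) \<in> E)"
    using p by (auto simp: is_path_def)
  have act: "\<And>i. 0 < i \<Longrightarrow> i < length xs - 1 \<Longrightarrow> (if is_collider ds i then (\<exists>z \<in> Z. descendant E (xs ! i) z) else xs ! i \<notin> Z)"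
    using ac by (auto simp: active_path_def)
  have x0: "xs!0 = a" using L by (cases xs) auto
  have main: "\<And>j. 1 \<le> j \<longrightarrow> j < length xs \<longrightarrow> rch E (okf E Z) a (xs!j) (ds!(j-1))"
  proof -
    fix j show "1 \<le> j \<longrightarrow> j < length xs \<longrightarrow> rch E (okf E Z) a (xs!j) (ds!(j-1))"
    proof (induction j)
      case 0 then show ?case by simp
    next
      case (Suc j)
      show ?case
      proof (intro impI)
        assume j: "Suc j < length xs"
        have jd: "j < length ds" using j L by simp
        from ed jd have "if ds!j then (xs!j, xs!(j+1)) \<in> E else (xs!(j+1), xs!j) \<in> E" by blast
        then have e: "if ds!j then (xs!j, xs!(Suc j)) \<in> E else (xs!(Suc j), xs!j) \<in> E" by (simp only: Suc_eq_plus1)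
        show "rch E (okf E Z) a (xs!Suc j) (ds!(Suc j - 1))"
        proof (cases "j = 0")
          case True
          then show ?thesis using e x0 aZ
            by (cases "ds!0") (auto simp: okf_def intro: rch.fw[OF rch.st] rch.bw[OF rch.st])
        next
          case False
          then have r: "rch E (okf E Z) a (xs!j) (ds!(j-1))" using Suc.IH j by simp
          have a: "if is_collider ds j then (\<exists>z \<in> Z. descendant E (xs ! j) z) else xs ! j \<notin> Z"
            using act[of j] False j by simp
          show ?thesis
          proof (cases "ds!j")
            case True
            have o: "okf E Z (xs!j) (ds!(j-1)) False" using a True by (simp add: okf_def is_collider_def)
            show ?thesis using rch.fw[OF r _ o] e True by simp
          next
            case False
            have o: "okf E Z (xs!j) (ds!(j-1)) True" using a False by (simp add: okf_def is_collider_def)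
            show ?thesis using rch.bw[OF r _ o] e False by simp
          qed
        qed
      qed
    qed
  qed
  have "xs \<noteq> []" using L by auto
  then have "b = xs!(length xs - 1)" using L by (simp add: last_conv_nth)
  moreover have "length ds - 1 = (length xs - 1) - 1" using L by simp
  ultimately show ?thesis using main[of "length xs - 1"] L by simp
qed

lemma rch_path:
  assumes "rch E (okf E Z) a v h"
  shows "\<exists>xs ds. xs \<noteq> [] \<and> length ds = length xs - 1 \<and> hd xs = a \<and> last xs = v \<and>
    (\<forall>i<length ds. (if ds!i then (xs!i, xs!(i+1)) \<in> E else (xs!(i+1), xs!i) \<in> E)) \<and>
    (\<forall>i. 0 < i \<and> i < length xs - 1 \<longrightarrow> (if is_collider ds i then (\<exists>z\<in>Z. descendant E (xs!i) z) else xs!i \<notin> Z)) \<and>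
    (if length xs = 1 then h = False else ds!(length ds - 1) = h)"
  using assms
proof (induction rule: rch.induct)
  case st
  show ?case by (rule exI[of _ "[a]"], rule exI[of _ "[]"]) simp
next
  case (fw u h x)
  then obtain xs ds where P: "xs \<noteq> []" "length ds = length xs - 1" "hd xs = a" "last xs = u"
    "\<forall>i<length ds. (if ds!i then (xs!i, xs!(i+1)) \<in> E else (xs!(i+1), xs!i) \<in> E)"
    "\<forall>i. 0 < i \<and> i < length xs - 1 \<longrightarrow> (if is_collider ds i then (\<exists>z\<in>Z. descendant E (xs!i) z) else xs!i \<notin> Z)"
    "if length xs = 1 then h = False else ds!(length ds - 1) = h" by blast
  define xs' where "xs' = xs @ [x]"
  define ds' where "ds' = ds @ [True]"
  have lu: "xs!(length xs - 1) = u" using P by (simp add: last_conv_nth)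
  have "xs' \<noteq> []" "length ds' = length xs' - 1" "hd xs' = a" "last xs' = x"
    using P by (auto simp: xs'_def ds'_def)
  moreover have "\<forall>i<length ds'. (if ds'!i then (xs'!i, xs'!(i+1)) \<in> E else (xs'!(i+1), xs'!i) \<in> E)"
  proof (intro allI impI)
    fix i assume i: "i < length ds'"
    show "if ds'!i then (xs'!i, xs'!(i+1)) \<in> E else (xs'!(i+1), xs'!i) \<in> E"
    proof (cases "i < length ds")
      case True
      then show ?thesis using P(2,5) by (auto simp: xs'_def ds'_def nth_append)
    next
      case False
      then have "i = length ds" using i by (simp add: ds'_def)
      then show ?thesis using P(1,2) lu fw.hyps(2) by (auto simp: xs'_def ds'_def nth_append)
    qed
  qed
  moreover have "\<forall>i. 0 < i \<and> i < length xs' - 1 \<longrightarrow> (if is_collider ds' i then (\<exists>z\<in>Z. descendant E (xs'!i) z) else xs'!i \<notin> Z)"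
  proof (intro allI impI)
    fix i assume i: "0 < i \<and> i < length xs' - 1"
    show "if is_collider ds' i then (\<exists>z\<in>Z. descendant E (xs'!i) z) else xs'!i \<notin> Z"
    proof (cases "i < length xs - 1")
      case True
      then have "is_collider ds' i = is_collider ds i" using P(2) i
        by (auto simp: is_collider_def ds'_def nth_append)
      then show ?thesis using P(6) True i by (auto simp: xs'_def nth_append)
    next
      case False
      have "i < length xs" using i by (simp add: xs'_def)
      then have ii: "i = length xs - 1" using False by linarith
      then have "\<not> is_collider ds' i" using P(2) i by (auto simp: is_collider_def ds'_def nth_append)
      moreover have "xs'!i = u" using ii lu P(1) by (simp add: xs'_def nth_append)
      moreover have "u \<notin> Z" using fw.hyps(3) by (simp add: okf_def)
      ultimately show ?thesis by simp
    qed
  qed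
  moreover have "if length xs' = 1 then True = False else ds'!(length ds' - 1) = True"
    using P(1) by (simp add: xs'_def ds'_def)
  ultimately show ?case by blast
next
  case (bw u h x)
  then obtain xs ds where P: "xs \<noteq> []" "length ds = length xs - 1" "hd xs = a" "last xs = u"
    "\<forall>i<length ds. (if ds!i then (xs!i, xs!(i+1)) \<in> E else (xs!(i+1), xs!i) \<in> E)"
    "\<forall>i. 0 < i \<and> i < length xs - 1 \<longrightarrow> (if is_collider ds i then (\<exists>z\<in>Z. descendant E (xs!i) z) else xs!i \<notin> Z)"
    "if length xs = 1 then h = False else ds!(length ds - 1) = h" by blast
  define xs' where "xs' = xs @ [x]"
  define ds' where "ds' = ds @ [False]"
  have lu: "xs!(length xs - 1) = u" using P by (simp add: last_conv_nth)
  have "xs' \<noteq> []" "length ds' = length xs' - 1" "hd xs' = a" "last xs' = x"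
    using P by (auto simp: xs'_def ds'_def)
  moreover have "\<forall>i<length ds'. (if ds'!i then (xs'!i, xs'!(i+1)) \<in> E else (xs'!(i+1), xs'!i) \<in> E)"
  proof (intro allI impI)
    fix i assume i: "i < length ds'"
    show "if ds'!i then (xs'!i, xs'!(i+1)) \<in> E else (xs'!(i+1), xs'!i) \<in> E"
    proof (cases "i < length ds")
      case True
      then show ?thesis using P(2,5) by (auto simp: xs'_def ds'_def nth_append)
    next
      case False
      then have "i = length ds" using i by (simp add: ds'_def)
      then show ?thesis using P(1,2) lu bw.hyps(2) by (auto simp: xs'_def ds'_def nth_append)
    qed
  qed
  moreover have "\<forall>i. 0 < i \<and> i < length xs' - 1 \<longrightarrow> (if is_collider ds' i then (\<exists>z\<in>Z. descendant E (xs'!i) z) else xs'!i \<notin> Z)"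
  proof (intro allI impI)
    fix i assume i: "0 < i \<and> i < length xs' - 1"
    show "if is_collider ds' i then (\<exists>z\<in>Z. descendant E (xs'!i) z) else xs'!i \<notin> Z"
    proof (cases "i < length xs - 1")
      case True
      then have "is_collider ds' i = is_collider ds i" using P(2) i
        by (auto simp: is_collider_def ds'_def nth_append)
      then show ?thesis using P(6) True i by (auto simp: xs'_def nth_append)
    next
      case False
      have "i < length xs" using i by (simp add: xs'_def)
      then have ii: "i = length xs - 1" using False by linarith
      have lx: "length xs \<noteq> 1" using i ii by simp
      then have hh: "ds!(length ds - 1) = h" using P(7) by simp
      have "is_collider ds' i = h" using P(2) i ii hh lx
        by (auto simp: is_collider_def ds'_def nth_append)
      moreover have "xs'!i = u" using ii lu P(1) by (simp add: xs'_def nth_append)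
      ultimately show ?thesis using bw.hyps(3) by (simp add: okf_def)
    qed
  qed
  moreover have "if length xs' = 1 then False = False else ds'!(length ds' - 1) = False"
    using P(1) by (simp add: xs'_def ds'_def)
  ultimately show ?case by blast
qed

lemma conn_iff:
  assumes "a \<noteq> b" "a \<notin> Z"
  shows "(\<not> d_separated E a b Z) \<longleftrightarrow> (\<exists>h. rch E (okf E Z) a b h)"
proof
  assume "\<not> d_separated E a b Z"
  then obtain xs ds where p1: "is_path E a b xs ds" and p2: "active_path E Z xs ds" by (auto simp: d_separated_def)
  show "\<exists>h. rch E (okf E Z) a b h" using path_rch[OF p1 p2 assms(2)] by (rule exI)
next
  assume "\<exists>h. rch E (okf E Z) a b h"
  then obtain h where "rch E (okf E Z) a b h" by blast
  from rch_path[OF this] obtain xs ds where P: "xs \<noteq> []" "length ds = length xs - 1" "hd xs = a" "last xs = b"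
    "\<forall>i<length ds. (if ds!i then (xs!i, xs!(i+1)) \<in> E else (xs!(i+1), xs!i) \<in> E)"
    "\<forall>i. 0 < i \<and> i < length xs - 1 \<longrightarrow> (if is_collider ds i then (\<exists>z\<in>Z. descendant E (xs!i) z) else xs!i \<notin> Z)"
    by blast
  have "length xs \<noteq> 1"
  proof
    assume "length xs = 1"
    then obtain y where "xs = [y]" by (cases xs) auto
    then show False using P(3,4) assms(1) by simp
  qed
  moreover have "length xs \<noteq> 0" using P(1) by simp
  ultimately have "length xs \<ge> 2" by linarith
  then have "is_path E a b xs ds" "active_path E Z xs ds" using P
    by (auto simp: is_path_def active_path_def)
  then show "\<not> d_separated E a b Z" by (auto simp: d_separated_def)
qed

theorem mainTheorem11:
  fixes V :: "'a set" and E :: "('a \<times> 'a) set" and C :: "'a list"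
  assumes "dcg V E" and "is_cycle V E C"
  shows "markov_equivalent V E (reverse_cycle E C)"
proof -
  define S where "S = set C"
  define nx where "nx = nxt C"
  define pv where "pv = prv C"
  have cy: "cyc E S nx pv" using cycle_facts(1)[OF assms(2)] by (simp add: S_def nx_def pv_def)
  have Heq: "reverse_cycle E C = revc E S nx" using cycle_facts(2)[OF assms(2)] by (simp add: S_def nx_def)
  define H where "H = revc E S nx"
  have cy2: "cyc H S pv nx" using cyc_rev[OF cy] by (simp add: H_def)
  have noloop: "\<forall>v. (v,v) \<notin> E" using assms(1) by (simp add: dcg_def)
  have HH: "revc H S pv = E" using revc_revc[OF cy noloop] by (simp add: H_def)
  have rt: "H\<^sup>* = E\<^sup>*" using rtrancl_revc[OF cy] by (simp add: H_def)
  have okeq: "okf H Z = okf E Z" for Z by (rule ext)+ (simp add: okf_def descendant_def rt)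
  have gen: "\<And>E' H' nx' pv' Z a b h. cyc E' S nx' pv' \<Longrightarrow> H' = revc E' S nx' \<Longrightarrow> okf H' Z = okf E' Z \<Longrightarrow>
      b \<notin> Z \<Longrightarrow> rch E' (okf E' Z) a b h \<Longrightarrow> \<exists>h'. rch H' (okf H' Z) a b h'"
  proof -
    fix E' H' nx' pv' Z a b h
    assume c: "cyc E' S nx' pv'" and h: "H' = revc E' S nx'" and o: "okf H' Z = okf E' Z"
      and bZ: "b \<notin> Z" and r: "rch E' (okf E' Z) a b h"
    have "\<exists>h'. rch H' (okf E' Z) a b h'"
    proof (rule sim[OF c h _ _ _ r bZ, where An = "{v. \<exists>z\<in>Z. (v,z) \<in> E'\<^sup>*}"])
      show "\<And>v h m. okf E' Z v h m = (if h \<and> m then v \<in> {v. \<exists>z\<in>Z. (v,z) \<in> E'\<^sup>*} else v \<notin> Z)"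
        by (simp add: okf_def descendant_def)
      show "Z \<subseteq> {v. \<exists>z\<in>Z. (v,z) \<in> E'\<^sup>*}" by blast
      show "\<And>x y. (x,y) \<in> E' \<Longrightarrow> y \<in> {v. \<exists>z\<in>Z. (v,z) \<in> E'\<^sup>*} \<Longrightarrow> x \<in> {v. \<exists>z\<in>Z. (v,z) \<in> E'\<^sup>*}"
        by (blast intro: converse_rtrancl_into_rtrancl)
    qed
    then show "\<exists>h'. rch H' (okf H' Z) a b h'" using o by simp
  qed
  show ?thesis
    unfolding markov_equivalent_def Heq
  proof (intro ballI allI impI)
    fix a b Z assume ab: "a \<in> V" "b \<in> V" and Z: "a \<noteq> b \<and> Z \<subseteq> V - {a, b}"
    have aZ: "a \<notin> Z" and bZ: "b \<notin> Z" and ne: "a \<noteq> b" using Z by auto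
    have 1: "(\<not> d_separated E a b Z) \<longleftrightarrow> (\<exists>h. rch E (okf E Z) a b h)" by (rule conn_iff[OF ne aZ])
    have 2: "(\<not> d_separated H a b Z) \<longleftrightarrow> (\<exists>h. rch H (okf H Z) a b h)" by (rule conn_iff[OF ne aZ])
    have "(\<exists>h. rch E (okf E Z) a b h) \<longleftrightarrow> (\<exists>h. rch H (okf H Z) a b h)"
    proof
      assume "\<exists>h. rch E (okf E Z) a b h"
      then show "\<exists>h. rch H (okf H Z) a b h" using gen[OF cy H_def okeq bZ] by blast
    next
      assume "\<exists>h. rch H (okf H Z) a b h"
      then show "\<exists>h. rch E (okf E Z) a b h" using gen[OF cy2 HH[symmetric] _ bZ] okeq by metis
    qed
    then have "d_separated E a b Z \<longleftrightarrow> d_separated H a b Z"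
      using 1 2 by blast
    then show "d_separated E a b Z \<longleftrightarrow> d_separated (revc E S nx) a b Z"
      by (simp add: H_def)
  qed
qed

end
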